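(* The system ($m\mathcal{H}1$) $$u_2=v+t\frac{p-q}{s-t},\qquad v_1=u+s\frac{p-q}{s-t},\qquad s_2=\frac{1}{t}+\frac{p-q}{t(u-v)},\qquad t_1=\frac{1}{s}+\frac{p-q}{s(u-v)},$$ together with the constraint $tu=sv$ (or equivalently with the constraint $s_2u_2=t_1v_1$), leads to the integrable lattice equation $H1$: $(x_{12}-x)(x_1-x_2)=p-q$; that is, there is a potential function $x$ on the vertices with $u=x_1x$, $v=x_2x$, $s=x_1/x$, $t=x_2/x$, and in terms of $x$ the system is exactly $H1$.
   Context: $u,s$ are functions on horizontal edges and $v,t$ on vertical edges of the $\mathbb{Z}^2$ graph; for a square with lower-left vertex $(m,n)$, $u,s$ sit on the bottom edge, $v,t$ on the left edge, $u_2,s_2$ on the top edge, $v_1,t_1$ on the right edge; $p$ depends only on $m$, $q$ only on $n$. For a vertex function, $x=x_{m,n}$, $x_1=x_{m+1,n}$, $x_2=x_{m,n+1}$, $x_{12}=x_{m+1,n+1}$. *)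

theory Defs
  imports Complex_Main
begin

end

theory Submission
  imports Defs
begin

primrec fwd :: "(int \<Rightarrow> complex) \<Rightarrow> nat \<Rightarrow> complex" where
  "fwd f 0 = 1" | "fwd f (Suc n) = f (int n) * fwd f n"

primrec bwd :: "(int \<Rightarrow> complex) \<Rightarrow> nat \<Rightarrow> complex" where
  "bwd f 0 = 1" | "bwd f (Suc n) = bwd f n / f (- int n - 1)"

definition pot :: "(int \<Rightarrow> complex) \<Rightarrow> int \<Rightarrow> complex" where
  "pot f k = (if 0 \<le> k then fwd f (nat k) else bwd f (nat (-k)))"

lemma fwd_nz: "(\<And>k. f k \<noteq> 0) \<Longrightarrow> fwd f n \<noteq> 0"
  by (induction n) auto

lemma bwd_nz: "(\<And>k. f k \<noteq> 0) \<Longrightarrow> bwd f n \<noteq> 0"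
  by (induction n) auto

lemma pot_nz: "(\<And>k. f k \<noteq> 0) \<Longrightarrow> pot f k \<noteq> 0"
  by (simp add: pot_def fwd_nz bwd_nz)

lemma pot0: "pot f 0 = 1" by (simp add: pot_def)

lemma pot_step:
  assumes nz: "\<And>k. f k \<noteq> 0"
  shows "pot f (k+1) = f k * pot f k"
proof (cases "0 \<le> k")
  case True
  then have "nat (k+1) = Suc (nat k)" by simp
  then show ?thesis using True by (simp add: pot_def)
next
  case False
  show ?thesis
  proof (cases "k = -1")
    case True
    then show ?thesis using nz[of "-1"] by (simp add: pot_def)
  next
    case F2: False
    define j where "j = nat (-k - 1)"
    have k: "k = - int j - 1" using False F2 j_def by simp
    have "nat (-k) = Suc j" using k by simp
    moreover have "nat (-(k+1)) = j" using k by simp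
    moreover have "\<not> 0 \<le> k + 1" using False F2 by simp
    ultimately show ?thesis using False nz[of k] k by (simp add: pot_def)
  qed
qed

lemma potential2:
  fixes g h :: "int \<Rightarrow> int \<Rightarrow> complex"
  assumes gnz: "\<And>m n. g m n \<noteq> 0" and hnz: "\<And>m n. h m n \<noteq> 0"
    and cl: "\<And>m n. g m (n+1) * h m n = h (m+1) n * g m n"
  shows "\<exists>y. (\<forall>m n. y m n \<noteq> 0) \<and> y 0 0 = 1 \<and>
     (\<forall>m n. y (m+1) n = g m n * y m n \<and> y m (n+1) = h m n * y m n)"
proof -
  define A where "A = pot (\<lambda>i. g i 0)"
  define B where "B = (\<lambda>m. pot (\<lambda>j. h m j))"
  define y where "y = (\<lambda>m n. A m * B m n)"
  have Anz: "A m \<noteq> 0" for m unfolding A_def by (rule pot_nz) (simp add: gnz)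
  have Bnz: "B m n \<noteq> 0" for m n unfolding B_def by (rule pot_nz) (simp add: hnz)
  have Astep: "A (m+1) = g m 0 * A m" for m unfolding A_def by (rule pot_step) (simp add: gnz)
  have Bstep: "B m (n+1) = h m n * B m n" for m n unfolding B_def by (rule pot_step) (simp add: hnz)
  have key: "B (m+1) n * g m 0 = g m n * B m n" for m n
  proof (induction n rule: int_induct[where k=0])
    case base
    then show ?case by (simp add: B_def pot0)
  next
    case (step1 i)
    have "B (m+1) (i+1) * g m 0 = h (m+1) i * (B (m+1) i * g m 0)" by (simp add: Bstep)
    also have "\<dots> = h (m+1) i * g m i * B m i" using step1 by simp
    also have "\<dots> = g m (i+1) * h m i * B m i" using cl[of m i] by simp
    also have "\<dots> = g m (i+1) * B m (i+1)" by (simp add: Bstep)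
    finally show ?case .
  next
    case (step2 i)
    have e1: "B (m+1) i = h (m+1) (i-1) * B (m+1) (i-1)" using Bstep[of "m+1" "i-1"] by simp
    have e2: "B m i = h m (i-1) * B m (i-1)" using Bstep[of m "i-1"] by simp
    have c: "g m i * h m (i-1) = h (m+1) (i-1) * g m (i-1)" using cl[of m "i-1"] by simp
    have "h (m+1) (i-1) * (B (m+1) (i-1) * g m 0) = h (m+1) (i-1) * (g m (i-1) * B m (i-1))"
      using step2 e1 e2 c by (simp add: algebra_simps)
    then show ?case using hnz[of "m+1" "i-1"] by simp
  qed
  have r1: "y m n \<noteq> 0" for m n by (simp add: y_def Anz Bnz)
  have r2: "y 0 0 = 1" by (simp add: y_def A_def B_def pot0)
  have r3: "y (m+1) n = g m n * y m n" for m n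
  proof -
    have "y (m+1) n = g m 0 * A m * B (m+1) n" by (simp add: y_def Astep)
    also have "\<dots> = A m * (B (m+1) n * g m 0)" by (simp add: algebra_simps)
    also have "\<dots> = g m n * y m n" using key[of m n] by (simp add: y_def algebra_simps)
    finally show ?thesis .
  qed
  have r4: "y m (n+1) = h m n * y m n" for m n by (simp add: y_def Bstep)
  show ?thesis using r1 r2 r3 r4 by blast
qed

theorem proposition3p5:
  fixes u s v t :: "int \<Rightarrow> int \<Rightarrow> complex"
    and p q :: "int \<Rightarrow> complex"
  assumes nz_s: "\<And>m n. s m n \<noteq> 0"
    and nz_t: "\<And>m n. t m n \<noteq> 0"
    and ne_st: "\<And>m n. s m n \<noteq> t m n"
    and ne_uv: "\<And>m n. u m n \<noteq> v m n"
    and eq_u: "\<And>m n. u m (n+1) = v m n + t m n * (p m - q n) / (s m n - t m n)"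
    and eq_v: "\<And>m n. v (m+1) n = u m n + s m n * (p m - q n) / (s m n - t m n)"
    and eq_s: "\<And>m n. s m (n+1) = 1 / t m n + (p m - q n) / (t m n * (u m n - v m n))"
    and eq_t: "\<And>m n. t (m+1) n = 1 / s m n + (p m - q n) / (s m n * (u m n - v m n))"
    and constraint: "\<And>m n. t m n * u m n = s m n * v m n"
  shows "\<exists>x :: int \<Rightarrow> int \<Rightarrow> complex.
           (\<forall>m n. x m n \<noteq> 0) \<and>
           (\<forall>m n. u m n = x (m+1) n * x m n \<and> v m n = x m (n+1) * x m n \<and>
                  s m n = x (m+1) n / x m n \<and> t m n = x m (n+1) / x m n) \<and>
           (\<forall>m n. (x (m+1) (n+1) - x m n) * (x (m+1) n - x m (n+1)) = p m - q n)"
proof -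
  have vdef: "v m n = t m n * u m n / s m n" for m n
    using constraint[of m n] nz_s[of m n] by (simp add: field_simps)
  have unz: "u m n \<noteq> 0" for m n
    using ne_uv[of m n] vdef[of m n] by auto
  have uv: "u m n - v m n = u m n * (s m n - t m n) / s m n" for m n
    using vdef[of m n] nz_s[of m n] by (simp add: field_simps)
  have stnz: "s m n - t m n \<noteq> 0" for m n using ne_st[of m n] by simp
  have uvnz: "u m n - v m n \<noteq> 0" for m n using ne_uv[of m n] by simp
  have ratio: "1 / (u m n - v m n) = s m n / (u m n * (s m n - t m n))" for m n
    using uv[of m n] unz[of m n] nz_s[of m n] stnz[of m n] by simp
  have E1: "u m n * (1 + (p m - q n) / (u m n - v m n)) = u m n + s m n * (p m - q n) / (s m n - t m n)" for m n
  proof -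
    have "u m n * (1 + (p m - q n) / (u m n - v m n)) = u m n + u m n * (p m - q n) * (1 / (u m n - v m n))"
      using uvnz[of m n] by (simp add: field_simps)
    also have "\<dots> = u m n + s m n * (p m - q n) / (s m n - t m n)"
      unfolding ratio using unz[of m n] by simp
    finally show ?thesis .
  qed
  have E2: "v m n * (1 + (p m - q n) / (u m n - v m n)) = v m n + t m n * (p m - q n) / (s m n - t m n)" for m n
  proof -
    have "v m n * (1 + (p m - q n) / (u m n - v m n)) = v m n + v m n * (p m - q n) * (1 / (u m n - v m n))"
      using uvnz[of m n] by (simp add: field_simps)
    also have "\<dots> = v m n + t m n * (p m - q n) / (s m n - t m n)"
      unfolding ratio using unz[of m n] nz_s[of m n] vdef[of m n] by simp
    finally show ?thesis .
  qed
  have t1: "t (m+1) n * s m n = 1 + (p m - q n) / (u m n - v m n)" for m n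
  proof -
    have "s m n * ((p m - q n) / (s m n * (u m n - v m n))) = (p m - q n) / (u m n - v m n)"
      using nz_s[of m n] by simp
    then show ?thesis using nz_s[of m n] by (simp add: eq_t[of m n] distrib_left mult.commute)
  qed
  have s2: "s m (n+1) * t m n = 1 + (p m - q n) / (u m n - v m n)" for m n
  proof -
    have "t m n * ((p m - q n) / (t m n * (u m n - v m n))) = (p m - q n) / (u m n - v m n)"
      using nz_t[of m n] by simp
    then show ?thesis using nz_t[of m n] by (simp add: eq_s[of m n] distrib_right)
  qed
  have cl: "s m (n+1) * t m n = t (m+1) n * s m n" for m n using t1 s2 by simp
  obtain y where ynz: "\<And>m n. y m n \<noteq> 0" and y00: "y 0 0 = 1"
    and ys: "\<And>m n. y (m+1) n = s m n * y m n" and yt: "\<And>m n. y m (n+1) = t m n * y m n"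
    using potential2[of s t, OF nz_s nz_t cl] by blast
  define X where "X m n = u m n / s m n" for m n
  have F1: "X (m+1) n = (s m n)^2 * X m n" for m n
  proof -
    have a: "X (m+1) n = v (m+1) n / t (m+1) n"
      using constraint[of "m+1" n] nz_s[of "m+1" n] nz_t[of "m+1" n]
      by (simp add: X_def field_simps)
    have "v (m+1) n = t (m+1) n * (s m n * u m n)"
    proof -
      have "t (m+1) n * (s m n * u m n) = u m n * (1 + (p m - q n) / (u m n - v m n))"
        using t1[of m n] by (simp only: mult.assoc[symmetric] mult.commute[of _ "u m n"]) (simp add: mult.commute)
      also have "\<dots> = u m n + s m n * (p m - q n) / (s m n - t m n)"
        by (rule E1)
      finally show ?thesis using eq_v[of m n] by simp
    qed
    then show ?thesis using a nz_t[of "m+1" n] nz_s[of m n]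
      by (simp add: X_def field_simps power2_eq_square)
  qed
  have F2: "X m (n+1) = (t m n)^2 * X m n" for m n
  proof -
    have "u m (n+1) = s m (n+1) * (t m n * v m n)"
    proof -
      have "s m (n+1) * (t m n * v m n) = v m n * (1 + (p m - q n) / (u m n - v m n))"
        using s2[of m n] by (simp only: mult.assoc[symmetric] mult.commute[of _ "v m n"]) (simp add: mult.commute)
      also have "\<dots> = v m n + t m n * (p m - q n) / (s m n - t m n)"
        by (rule E2)
      finally show ?thesis using eq_u[of m n] by simp
    qed
    then show ?thesis using nz_s[of m "n+1"] nz_s[of m n] vdef[of m n]
      by (simp add: X_def field_simps power2_eq_square)
  qed
  define c where "c = csqrt (X 0 0)"
  define x where "x m n = c * y m n" for m n
  have Xnz: "X m n \<noteq> 0" for m n using unz[of m n] nz_s[of m n] by (simp add: X_def)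
  have cnz: "c \<noteq> 0" using Xnz[of 0 0] by (simp add: c_def)
  have xnz: "x m n \<noteq> 0" for m n by (simp add: x_def cnz ynz)
  have xs: "x (m+1) n = s m n * x m n" for m n by (simp add: x_def ys)
  have xt: "x m (n+1) = t m n * x m n" for m n by (simp add: x_def yt)
  have row: "(x m 0)^2 = X m 0" for m
  proof (induction m rule: int_induct[where k=0])
    case base then show ?case by (simp add: x_def y00 c_def)
  next
    case (step1 i) then show ?case by (simp add: xs F1 power_mult_distrib)
  next
    case (step2 i)
    have "(s (i-1) 0)^2 * (x (i-1) 0)^2 = (s (i-1) 0)^2 * X (i-1) 0"
      using step2 xs[of "i-1" 0] F1[of "i-1" 0] by (simp add: power_mult_distrib)
    then show ?case using nz_s[of "i-1" 0] by simp
  qed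
  have sq: "(x m n)^2 = X m n" for m n
  proof (induction n rule: int_induct[where k=0])
    case base then show ?case by (rule row)
  next
    case (step1 i) then show ?case by (simp add: xt F2 power_mult_distrib)
  next
    case (step2 i)
    have "(t m (i-1))^2 * (x m (i-1))^2 = (t m (i-1))^2 * X m (i-1)"
      using step2 xt[of m "i-1"] F2[of m "i-1"] by (simp add: power_mult_distrib)
    then show ?case using nz_t[of m "i-1"] by simp
  qed
  show ?thesis
  proof (intro exI conjI allI)
    show "x m n \<noteq> 0" for m n by (rule xnz)
    show "u m n = x (m+1) n * x m n" for m n
      using sq[of m n] nz_s[of m n] xs[of m n] by (simp add: X_def power2_eq_square field_simps)
    show "v m n = x m (n+1) * x m n" for m n
    proof -
      have "u m n = s m n * (x m n)^2" using sq[of m n] nz_s[of m n] by (simp add: X_def field_simps)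
      then have "v m n = t m n * (x m n)^2" using nz_s[of m n] by (simp add: vdef[of m n])
      then show ?thesis using xt[of m n] by (simp add: power2_eq_square)
    qed
    show "s m n = x (m+1) n / x m n" for m n using xnz[of m n] by (simp add: xs)
    show "t m n = x m (n+1) / x m n" for m n using xnz[of m n] by (simp add: xt)
    show "(x (m+1) (n+1) - x m n) * (x (m+1) n - x m (n+1)) = p m - q n" for m n
    proof -
      have a: "x (m+1) (n+1) = t (m+1) n * s m n * x m n" using xt[of "m+1" n] xs[of m n] by simp
      have b: "x (m+1) n = s m n * x m n" by (rule xs)
      have c: "x m (n+1) = t m n * x m n" by (rule xt)
      have "(x (m+1) (n+1) - x m n) * (x (m+1) n - x m (n+1))
          = (t (m+1) n * s m n - 1) * (s m n - t m n) * (x m n)^2"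
        unfolding a b c by (simp add: power2_eq_square algebra_simps)
      also have "\<dots> = (p m - q n) / (u m n - v m n) * (u m n - v m n)"
        using t1[of m n] sq[of m n] uv[of m n] by (simp add: X_def)
      also have "\<dots> = p m - q n" using ne_uv[of m n] by simp
      finally show ?thesis .
    qed
  qed
qed

end
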